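(* Let $p\in(1,\infty)$, let $G$ be a countable discrete group, let $E$ be a $\sigma$-finite separable $L^p$-space, let $A\subset\mathcal B(E)$ be a weak* closed subalgebra containing $I_E$, and let $\alpha$ be a weak* continuous isometric action of $G$ on $A$. Then $W^*_p(G,A,\alpha)\subset\mathcal B(\ell^p(G))\bar\otimes A$ (as subsets of $\mathcal B(\ell^p(G)\otimes_pE)$).
   Context: $\mathcal B(E)$ carries the weak* topology as dual of the nuclear operators $E'\widehat\otimes E$; $\mathcal B(\ell^p(G))\bar\otimes A$ is the weak* closure of the algebraic tensor product in $\mathcal B(\ell^p(G)\otimes_pE)$. A weak* continuous isometric action is a homomorphism from $G$ into isometric weak* continuous automorphisms of $A$. On $\ell^p(G)\otimes_pE=\ell^p(G,E)$, $(\pi(a)\xi)(s)=\alpha_{s^{-1}}(a)\xi(s)$, $(\lambda_p^E(s)\xi)(t)=\xi(s^{-1}t)$, and $W^*_p(G,A,\alpha)$ is the weak* closure of the finite sums $\sum_s\pi(a_s)\lambda_p^E(s)$. *)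

theory Defs
  imports "HOL-Analysis.Analysis" "HOL-Probability.Probability"
begin

record 'v nspace =
  carrier :: "'v set"
  vadd :: "'v \<Rightarrow> 'v \<Rightarrow> 'v"
  vsmul :: "complex \<Rightarrow> 'v \<Rightarrow> 'v"
  nrm :: "'v \<Rightarrow> real"

definition lin_on :: "'v nspace \<Rightarrow> ('v \<Rightarrow> 'v) \<Rightarrow> bool" where
  "lin_on X T \<longleftrightarrow> (\<forall>x\<in>carrier X. \<forall>y\<in>carrier X.
      T (vadd X x y) = vadd X (T x) (T y)) \<and>
   (\<forall>c. \<forall>x\<in>carrier X. T (vsmul X c x) = vsmul X c (T x))"

definition bops :: "'v nspace \<Rightarrow> ('v \<Rightarrow> 'v) set" where
  "bops X = {T. (\<forall>x\<in>carrier X. T x \<in> carrier X) \<and> lin_on X T \<and>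
      (\<exists>C. \<forall>x\<in>carrier X. nrm X (T x) \<le> C * nrm X x)}"

definition opnorm :: "'v nspace \<Rightarrow> ('v \<Rightarrow> 'v) \<Rightarrow> real" where
  "opnorm X T = Sup {nrm X (T x) |x. x \<in> carrier X \<and> nrm X x \<le> 1}"

definition dual :: "'v nspace \<Rightarrow> ('v \<Rightarrow> complex) set" where
  "dual X = {\<phi>. (\<forall>x\<in>carrier X. \<forall>y\<in>carrier X. \<phi> (vadd X x y) = \<phi> x + \<phi> y) \<and>
      (\<forall>c. \<forall>x\<in>carrier X. \<phi> (vsmul X c x) = c * \<phi> x) \<and>
      (\<exists>C. \<forall>x\<in>carrier X. norm (\<phi> x) \<le> C * nrm X x)}"

definition dnorm :: "'v nspace \<Rightarrow> ('v \<Rightarrow> complex) \<Rightarrow> real" where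
  "dnorm X \<phi> = Sup {norm (\<phi> x) |x. x \<in> carrier X \<and> nrm X x \<le> 1}"

text \<open>Functionals on B(X) given by elements \<Sum> \<phi>_n \<otimes> x_n of the projective tensor
  product X' \<otimes>^ X (nuclear operators), acting by T \<mapsto> \<Sum> \<phi>_n (T x_n).\<close>
definition nuclear_fun :: "'v nspace \<Rightarrow> (('v \<Rightarrow> 'v) \<Rightarrow> complex) \<Rightarrow> bool" where
  "nuclear_fun X \<omega> \<longleftrightarrow> (\<exists>xs \<phi>s. (\<forall>n. xs n \<in> carrier X \<and> \<phi>s n \<in> dual X) \<and>
      summable (\<lambda>n. nrm X (xs n) * dnorm X (\<phi>s n)) \<and>
      (\<forall>T. \<omega> T = (\<Sum>n. \<phi>s n (T (xs n)))))"

text \<open>The weak* topology on B(X) as the dual of the nuclear operators.\<close>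
definition weakstar :: "'v nspace \<Rightarrow> ('v \<Rightarrow> 'v) topology" where
  "weakstar X = subtopology
     (topology_generated_by {{T. \<omega> T \<in> U} |\<omega> U. nuclear_fun X \<omega> \<and> open U}) (bops X)"

text \<open>A complex scalar multiplication making the real normed space 'e a complex normed space.\<close>
definition complex_structure :: "(complex \<Rightarrow> 'e::real_normed_vector \<Rightarrow> 'e) \<Rightarrow> bool" where
  "complex_structure sc \<longleftrightarrow>
     (\<forall>r x. sc (complex_of_real r) x = r *\<^sub>R x) \<and>
     (\<forall>a b x. sc (a * b) x = sc a (sc b x)) \<and>
     (\<forall>a b x. sc (a + b) x = sc a x + sc b x) \<and>
     (\<forall>a x y. sc a (x + y) = sc a x + sc a y) \<and>
     (\<forall>a x. norm (sc a x) = cmod a * norm x)"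

definition Espace :: "(complex \<Rightarrow> 'e::real_normed_vector \<Rightarrow> 'e) \<Rightarrow> 'e nspace" where
  "Espace sc = \<lparr>carrier = UNIV, vadd = (+), vsmul = sc, nrm = norm\<rparr>"

definition lp_scalar :: "real \<Rightarrow> ('g \<Rightarrow> complex) nspace" where
  "lp_scalar p = \<lparr>carrier = {f. (\<lambda>s. norm (f s) powr p) summable_on UNIV},
     vadd = (\<lambda>f g s. f s + g s), vsmul = (\<lambda>c f s. c * f s),
     nrm = (\<lambda>f. (\<Sum>\<^sub>\<infinity>s. norm (f s) powr p) powr (1/p))\<rparr>"

text \<open>\<ell>^p(G) \<otimes>_p E = \<ell>^p(G,E)\<close>
definition lpE :: "(complex \<Rightarrow> 'e \<Rightarrow> 'e) \<Rightarrow> real \<Rightarrow> ('g \<Rightarrow> 'e::real_normed_vector) nspace" where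
  "lpE sc p = \<lparr>carrier = {\<xi>. (\<lambda>s. norm (\<xi> s) powr p) summable_on UNIV},
     vadd = (\<lambda>\<xi> \<eta> s. \<xi> s + \<eta> s), vsmul = (\<lambda>c \<xi> s. sc c (\<xi> s)),
     nrm = (\<lambda>\<xi>. (\<Sum>\<^sub>\<infinity>s. norm (\<xi> s) powr p) powr (1/p))\<rparr>"

text \<open>U is an isometric isomorphism of E onto L^p(M) (elements of L^p(M)
  being represented by functions, modulo equality M-a.e.).\<close>
definition Lp_repr :: "(complex \<Rightarrow> 'e \<Rightarrow> 'e) \<Rightarrow> real \<Rightarrow> 'm measure \<Rightarrow> ('e::real_normed_vector \<Rightarrow> 'm \<Rightarrow> complex) \<Rightarrow> bool" where
  "Lp_repr sc p M U \<longleftrightarrow>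
     (\<forall>x. U x \<in> borel_measurable M \<and> integrable M (\<lambda>\<omega>. norm (U x \<omega>) powr p) \<and>
          norm x = (integral\<^sup>L M (\<lambda>\<omega>. norm (U x \<omega>) powr p)) powr (1/p)) \<and>
     (\<forall>x y. AE \<omega> in M. U (x + y) \<omega> = U x \<omega> + U y \<omega>) \<and>
     (\<forall>c x. AE \<omega> in M. U (sc c x) \<omega> = c * U x \<omega>) \<and>
     (\<forall>f \<in> borel_measurable M. integrable M (\<lambda>\<omega>. norm (f \<omega>) powr p) \<longrightarrow>
          (\<exists>x. AE \<omega> in M. U x \<omega> = f \<omega>))"

text \<open>Algebraic tensor product B(\<ell>^p(G)) \<odot> A inside B(\<ell>^p(G,E)): operators acting
  on elementary tensors f \<otimes> e as \<Sum>_i x_i f \<otimes> a_i e.\<close>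
definition alg_tensor :: "(complex \<Rightarrow> 'e::real_normed_vector \<Rightarrow> 'e) \<Rightarrow> real \<Rightarrow> ('e::real_normed_vector \<Rightarrow> 'e) set \<Rightarrow> (('g \<Rightarrow> 'e) \<Rightarrow> ('g \<Rightarrow> 'e)) set" where
  "alg_tensor sc p A = {T \<in> bops (lpE sc p). \<exists>(n::nat) xs as.
      (\<forall>i<n. xs i \<in> bops (lp_scalar p :: ('g \<Rightarrow> complex) nspace) \<and> as i \<in> A) \<and>
      (\<forall>f\<in>carrier (lp_scalar p :: ('g \<Rightarrow> complex) nspace). \<forall>e.
          T (\<lambda>s. sc (f s) e) = (\<lambda>s. \<Sum>i<n. sc (xs i f s) (as i e)))}"

definition vN_tensor :: "(complex \<Rightarrow> 'e \<Rightarrow> 'e) \<Rightarrow> real \<Rightarrow> ('e::real_normed_vector \<Rightarrow> 'e) set \<Rightarrow> (('g \<Rightarrow> 'e) \<Rightarrow> ('g \<Rightarrow> 'e)) set" where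
  "vN_tensor sc p A = weakstar (lpE sc p) closure_of alg_tensor sc p A"

text \<open>(\<pi>(a)\<xi>)(s) = \<alpha>_{s^-1}(a)(\<xi> s) and (\<lambda>(s)\<xi>)(t) = \<xi>(s^-1 t); the group is written additively.\<close>
definition pi_rep :: "('g::group_add \<Rightarrow> ('e \<Rightarrow> 'e) \<Rightarrow> ('e \<Rightarrow> 'e)) \<Rightarrow> ('e \<Rightarrow> 'e) \<Rightarrow> ('g \<Rightarrow> 'e) \<Rightarrow> ('g \<Rightarrow> 'e)" where
  "pi_rep \<alpha> a \<xi> = (\<lambda>s. \<alpha> (- s) a (\<xi> s))"

definition lam_rep :: "'g::group_add \<Rightarrow> ('g \<Rightarrow> 'e) \<Rightarrow> ('g \<Rightarrow> 'e)" where
  "lam_rep s \<xi> = (\<lambda>t. \<xi> (- s + t))"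

definition crossed_alg :: "('g::group_add \<Rightarrow> ('e::real_normed_vector \<Rightarrow> 'e) \<Rightarrow> ('e \<Rightarrow> 'e)) \<Rightarrow> ('e \<Rightarrow> 'e) set \<Rightarrow> (('g \<Rightarrow> 'e) \<Rightarrow> ('g \<Rightarrow> 'e)) set" where
  "crossed_alg \<alpha> A = {T. \<exists>F c. finite F \<and> (\<forall>s\<in>F. c s \<in> A) \<and>
      T = (\<lambda>\<xi>. \<lambda>t. \<Sum>s\<in>F. pi_rep \<alpha> (c s) (lam_rep s \<xi>) t)}"

definition Wstar_p :: "(complex \<Rightarrow> 'e \<Rightarrow> 'e) \<Rightarrow> real \<Rightarrow> ('g::group_add \<Rightarrow> ('e::real_normed_vector \<Rightarrow> 'e) \<Rightarrow> ('e \<Rightarrow> 'e)) \<Rightarrow> ('e \<Rightarrow> 'e) set \<Rightarrow> (('g \<Rightarrow> 'e) \<Rightarrow> ('g \<Rightarrow> 'e)) set" where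
  "Wstar_p sc p \<alpha> A = weakstar (lpE sc p) closure_of crossed_alg \<alpha> A"

definition wstar_closed_unital_subalg :: "(complex \<Rightarrow> 'e \<Rightarrow> 'e) \<Rightarrow> ('e::real_normed_vector \<Rightarrow> 'e) set \<Rightarrow> bool" where
  "wstar_closed_unital_subalg sc A \<longleftrightarrow> A \<subseteq> bops (Espace sc) \<and> id \<in> A \<and>
     (\<forall>a\<in>A. \<forall>b\<in>A. (\<lambda>x. a x + b x) \<in> A \<and> a \<circ> b \<in> A) \<and>
     (\<forall>c. \<forall>a\<in>A. (\<lambda>x. sc c (a x)) \<in> A) \<and>
     closedin (weakstar (Espace sc)) A"

definition wstar_isometric_action ::
  "(complex \<Rightarrow> 'e \<Rightarrow> 'e) \<Rightarrow> ('g::group_add \<Rightarrow> ('e::real_normed_vector \<Rightarrow> 'e) \<Rightarrow> ('e \<Rightarrow> 'e)) \<Rightarrow> ('e \<Rightarrow> 'e) set \<Rightarrow> bool" where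
  "wstar_isometric_action sc \<alpha> A \<longleftrightarrow>
     (\<forall>s. bij_betw (\<alpha> s) A A \<and>
        (\<forall>a\<in>A. \<forall>b\<in>A. \<alpha> s (\<lambda>x. a x + b x) = (\<lambda>x. \<alpha> s a x + \<alpha> s b x) \<and>
                       \<alpha> s (a \<circ> b) = \<alpha> s a \<circ> \<alpha> s b) \<and>
        (\<forall>c. \<forall>a\<in>A. \<alpha> s (\<lambda>x. sc c (a x)) = (\<lambda>x. sc c (\<alpha> s a x))) \<and>
        (\<forall>a\<in>A. opnorm (Espace sc) (\<alpha> s a) = opnorm (Espace sc) a) \<and>
        continuous_map (subtopology (weakstar (Espace sc)) A) (subtopology (weakstar (Espace sc)) A) (\<alpha> s)) \<and>
     (\<forall>s t. \<forall>a\<in>A. \<alpha> (s + t) a = \<alpha> s (\<alpha> t a)) \<and>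
     (\<forall>a\<in>A. \<alpha> 0 a = a)"

end

theory Submission imports Defs begin

lemma sc_zero:
  assumes "complex_structure sc" shows "sc c 0 = 0" "sc 0 x = 0"
proof -
  have "norm (sc c 0) = 0" using assms unfolding complex_structure_def by simp
  then show "sc c 0 = 0" by simp
  have "sc (complex_of_real 0) x = 0 *\<^sub>R x" using assms unfolding complex_structure_def by blast
  then show "sc 0 x = 0" by simp
qed

lemma trunc_carrier:
  fixes \<xi> :: "'g \<Rightarrow> 'e::real_normed_vector"
  assumes "\<xi> \<in> carrier (lpE sc p)" "p > 0"
  shows "(\<lambda>t. if t \<in> S then \<xi> t else 0) \<in> carrier (lpE sc p)"
    and "nrm (lpE sc p) (\<lambda>t. if t \<in> S then \<xi> t else 0) = (infsum (\<lambda>t. norm (\<xi> t) powr p) S) powr (1/p)"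
    and "nrm (lpE sc p) (\<lambda>t. if t \<in> S then \<xi> t else 0) \<le> nrm (lpE sc p) \<xi>"
proof -
  let ?g = "\<lambda>t. norm (\<xi> t) powr p"
  have g: "?g summable_on UNIV" using assms by (simp add: lpE_def)
  have gS: "?g summable_on S" using summable_on_subset_banach[OF g] by simp
  have eq: "(\<lambda>t. norm (if t \<in> S then \<xi> t else 0) powr p) = (\<lambda>t. if t \<in> S then ?g t else 0)"
    by auto
  have s: "(\<lambda>t. if t \<in> S then ?g t else 0) summable_on UNIV"
    using gS by (subst summable_on_cong_neutral[where T=S and g="?g"]) auto
  then show "(\<lambda>t. if t \<in> S then \<xi> t else 0) \<in> carrier (lpE sc p)"
    by (simp add: lpE_def eq)
  have i: "infsum (\<lambda>t. if t \<in> S then ?g t else 0) UNIV = infsum ?g S"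
    by (rule infsum_cong_neutral) auto
  show "nrm (lpE sc p) (\<lambda>t. if t \<in> S then \<xi> t else 0) = (infsum ?g S) powr (1/p)"
    by (simp add: lpE_def eq i)
  have "infsum ?g S \<le> infsum ?g UNIV"
    by (rule infsum_mono_neutral[OF gS g]) auto
  moreover have "0 \<le> infsum ?g S" by (rule infsum_nonneg) auto
  ultimately show "nrm (lpE sc p) (\<lambda>t. if t \<in> S then \<xi> t else 0) \<le> nrm (lpE sc p) \<xi>"
    using assms(2) by (simp add: lpE_def eq i powr_mono2)
qed

lemma tail_tendsto:
  fixes \<xi> :: "'g \<Rightarrow> 'e::real_normed_vector"
  assumes "\<xi> \<in> carrier (lpE sc p)" "p > 0"
  shows "((\<lambda>F. nrm (lpE sc p) (\<lambda>t. if t \<in> -F then \<xi> t else 0)) \<longlongrightarrow> 0) (finite_subsets_at_top UNIV)"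
proof -
  let ?g = "\<lambda>t. norm (\<xi> t) powr p"
  have g: "?g summable_on UNIV" using assms by (simp add: lpE_def)
  have hs: "(sum ?g \<longlongrightarrow> infsum ?g UNIV) (finite_subsets_at_top UNIV)"
    using has_sum_infsum[OF g] by (simp add: has_sum_def)
  have ev: "eventually (\<lambda>F. infsum ?g (-F) = infsum ?g UNIV - sum ?g F) (finite_subsets_at_top UNIV)"
  proof (rule eventually_finite_subsets_at_top_weakI)
    fix F :: "'g set" assume "finite F"
    have "infsum ?g (F \<union> -F) = infsum ?g F + infsum ?g (-F)"
      by (rule infsum_Un_disjoint) (use summable_on_subset_banach[OF g] in auto)
    then show "infsum ?g (-F) = infsum ?g UNIV - sum ?g F" using \<open>finite F\<close> by simp
  qed
  have "((\<lambda>F. infsum ?g UNIV - sum ?g F) \<longlongrightarrow> infsum ?g UNIV - infsum ?g UNIV) (finite_subsets_at_top UNIV)"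
    by (intro tendsto_intros hs)
  then have t0: "((\<lambda>F. infsum ?g (-F)) \<longlongrightarrow> 0) (finite_subsets_at_top UNIV)"
    using ev by (simp add: tendsto_cong)
  have "((\<lambda>F. infsum ?g (-F) powr (1/p)) \<longlongrightarrow> 0) (finite_subsets_at_top UNIV)"
    by (rule tendsto_zero_powrI[OF t0 tendsto_const]) (use assms(2) in \<open>auto intro!: infsum_nonneg\<close>)
  moreover have e: "\<And>F. nrm (lpE sc p) (\<lambda>t. if t \<in> -F then \<xi> t else 0) = infsum ?g (-F) powr (1/p)"
    by (rule trunc_carrier(2)[OF assms])
  ultimately show ?thesis by (simp only: e)
qed

lemma lpE_scale:
  fixes y :: "'g \<Rightarrow> 'e::real_normed_vector"
  assumes cs: "complex_structure sc" and y: "y \<in> carrier (lpE sc p)" and p: "p > 0"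
  shows "vsmul (lpE sc p) c y \<in> carrier (lpE sc p)"
    and "nrm (lpE sc p) (vsmul (lpE sc p) c y) = cmod c * nrm (lpE sc p) y"
proof -
  let ?g = "\<lambda>t. norm (y t) powr p"
  have g: "?g summable_on UNIV" using y by (simp add: lpE_def)
  have n: "\<And>x. norm (sc c x) = cmod c * norm x" using cs unfolding complex_structure_def by blast
  have eq: "(\<lambda>t. norm (sc c (y t)) powr p) = (\<lambda>t. cmod c powr p * ?g t)"
    by (simp add: n powr_mult)
  show "vsmul (lpE sc p) c y \<in> carrier (lpE sc p)"
    using summable_on_cmult_right[OF g] by (simp add: lpE_def eq)
  have "nrm (lpE sc p) (vsmul (lpE sc p) c y) = (cmod c powr p * infsum ?g UNIV) powr (1/p)"
    by (simp add: lpE_def eq infsum_cmult_right')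
  also have "\<dots> = (cmod c powr p) powr (1/p) * infsum ?g UNIV powr (1/p)"
    using infsum_nonneg[of UNIV ?g] by (simp add: powr_mult)
  also have "\<dots> = cmod c * nrm (lpE sc p) y"
    using p by (simp add: powr_powr lpE_def)
  finally show "nrm (lpE sc p) (vsmul (lpE sc p) c y) = cmod c * nrm (lpE sc p) y" .
qed

lemma lpE_nrm_nonneg: "nrm (lpE sc p) y \<ge> 0"
  by (simp add: lpE_def)

lemma dual_bound:
  fixes y :: "'g \<Rightarrow> 'e::real_normed_vector"
  assumes cs: "complex_structure sc" and y: "y \<in> carrier (lpE sc p)" and p: "p > 0"
    and phi: "\<phi> \<in> dual (lpE sc p)"
  shows "norm (\<phi> y) \<le> dnorm (lpE sc p) \<phi> * nrm (lpE sc p) y"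
proof -
  let ?X = "lpE sc p :: ('g \<Rightarrow> 'e) nspace"
  obtain C where C: "\<And>x. x \<in> carrier ?X \<Longrightarrow> norm (\<phi> x) \<le> C * nrm ?X x"
    using phi unfolding dual_def by blast
  have sm: "\<And>c x. x \<in> carrier ?X \<Longrightarrow> \<phi> (vsmul ?X c x) = c * \<phi> x"
    using phi unfolding dual_def by blast
  show ?thesis
  proof (cases "nrm ?X y = 0")
    case True
    then show ?thesis using C[OF y] by simp
  next
    case False
    then have pos: "nrm ?X y > 0" using lpE_nrm_nonneg[of sc p y] by simp
    define z where "z = vsmul ?X (complex_of_real (1 / nrm ?X y)) y"
    have zc: "z \<in> carrier ?X" unfolding z_def by (rule lpE_scale(1)[OF cs y p])
    have zn: "nrm ?X z = 1" unfolding z_def using lpE_scale(2)[OF cs y p] pos by (simp add: norm_divide)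
    have bdd: "bdd_above {norm (\<phi> x) |x. x \<in> carrier ?X \<and> nrm ?X x \<le> 1}"
    proof (rule bdd_aboveI[where M="max C 0"])
      fix r assume "r \<in> {norm (\<phi> x) |x. x \<in> carrier ?X \<and> nrm ?X x \<le> 1}"
      then obtain x where x: "r = norm (\<phi> x)" "x \<in> carrier ?X" "nrm ?X x \<le> 1" by blast
      have "C * nrm ?X x \<le> max C 0"
        using x(3) lpE_nrm_nonneg[of sc p x]
        by (metis max.cobounded1 max.cobounded2 mult_left_le mult_nonpos_nonneg order_trans nle_le)
      then show "r \<le> max C 0" using C[OF x(2)] x(1) by linarith
    qed
    have "norm (\<phi> z) \<le> dnorm ?X \<phi>"
      unfolding dnorm_def by (rule cSup_upper[OF _ bdd]) (use zc zn in auto)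
    moreover have "\<phi> z = complex_of_real (1 / nrm ?X y) * \<phi> y" unfolding z_def by (rule sm[OF y])
    ultimately have "norm (\<phi> y) / nrm ?X y \<le> dnorm ?X \<phi>"
      using pos by (simp add: norm_mult norm_divide)
    then show ?thesis using pos by (simp add: divide_simps mult.commute)
  qed
qed

definition trunc :: "'g set \<Rightarrow> (('g \<Rightarrow> 'e::real_normed_vector) \<Rightarrow> ('g \<Rightarrow> 'e)) \<Rightarrow> (('g \<Rightarrow> 'e) \<Rightarrow> ('g \<Rightarrow> 'e))" where
  "trunc F T = (\<lambda>\<xi> t. if t \<in> F then T \<xi> t else 0)"

lemma dnorm_nonneg:
  fixes sc :: "complex \<Rightarrow> 'e::real_normed_vector \<Rightarrow> 'e"
  assumes phi: "\<phi> \<in> dual (lpE sc p)" and cs: "complex_structure sc"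
  shows "dnorm (lpE sc p) \<phi> \<ge> 0"
proof -
  let ?X = "lpE sc p :: ('g \<Rightarrow> 'e) nspace"
  obtain C where C: "\<And>x. x \<in> carrier ?X \<Longrightarrow> norm (\<phi> x) \<le> C * nrm ?X x"
    using phi unfolding dual_def by blast
  have bdd: "bdd_above {norm (\<phi> x) |x. x \<in> carrier ?X \<and> nrm ?X x \<le> 1}"
  proof (rule bdd_aboveI[where M="max C 0"])
    fix r assume "r \<in> {norm (\<phi> x) |x. x \<in> carrier ?X \<and> nrm ?X x \<le> 1}"
    then obtain x where x: "r = norm (\<phi> x)" "x \<in> carrier ?X" "nrm ?X x \<le> 1" by blast
    have "C * nrm ?X x \<le> max C 0"
      using x(3) lpE_nrm_nonneg[of sc p x]
      by (metis max.cobounded1 max.cobounded2 mult_left_le mult_nonpos_nonneg order_trans nle_le)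
    then show "r \<le> max C 0" using C[OF x(2)] x(1) by linarith
  qed
  have z: "(\<lambda>_. 0) \<in> carrier ?X" "nrm ?X (\<lambda>_. 0) \<le> 1" by (simp_all add: lpE_def)
  have "norm (\<phi> (\<lambda>_. 0)) \<le> dnorm ?X \<phi>"
    unfolding dnorm_def by (rule cSup_upper[OF _ bdd]) (use z in blast)
  then show ?thesis using norm_ge_zero order_trans by blast
qed

lemma trunc_bops:
  fixes sc :: "complex \<Rightarrow> 'e::real_normed_vector \<Rightarrow> 'e"
  assumes T: "T \<in> bops (lpE sc p)" and p: "p > 0" and cs: "complex_structure sc"
  shows "trunc F T \<in> bops (lpE sc p)"
proof -
  let ?X = "lpE sc p :: ('g \<Rightarrow> 'e) nspace"
  have Tc: "\<And>x. x \<in> carrier ?X \<Longrightarrow> T x \<in> carrier ?X" using T by (simp add: bops_def)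
  have Tl: "lin_on ?X T" using T by (simp add: bops_def)
  obtain C where C: "\<And>x. x \<in> carrier ?X \<Longrightarrow> nrm ?X (T x) \<le> C * nrm ?X x"
    using T unfolding bops_def by blast
  have tc: "\<And>x. x \<in> carrier ?X \<Longrightarrow> trunc F T x \<in> carrier ?X"
    unfolding trunc_def by (rule trunc_carrier(1)[OF Tc p])
  have tn: "\<And>x. x \<in> carrier ?X \<Longrightarrow> nrm ?X (trunc F T x) \<le> C * nrm ?X x"
    unfolding trunc_def using trunc_carrier(3)[OF Tc p] C order_trans by blast
  have "lin_on ?X (trunc F T)"
    using Tl cs unfolding lin_on_def trunc_def
    by (auto simp: lpE_def sc_zero fun_eq_iff)
  then show ?thesis using tc tn unfolding bops_def by blast
qed

lemma nuclear_trunc: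
  fixes sc :: "complex \<Rightarrow> 'e::real_normed_vector \<Rightarrow> 'e"
  assumes T: "T \<in> bops (lpE sc p)" and p: "p > 0" and cs: "complex_structure sc"
    and om: "nuclear_fun (lpE sc p) \<omega>"
  shows "((\<lambda>F. \<omega> (trunc F T)) \<longlongrightarrow> \<omega> T) (finite_subsets_at_top (UNIV::'g set))"
proof -
  let ?X = "lpE sc p :: ('g \<Rightarrow> 'e) nspace"
  obtain xs \<phi>s where xs: "\<And>n. xs n \<in> carrier ?X" and ph: "\<And>n. \<phi>s n \<in> dual ?X"
    and sm: "summable (\<lambda>n. nrm ?X (xs n) * dnorm ?X (\<phi>s n))"
    and oe: "\<And>T. \<omega> T = (\<Sum>n. \<phi>s n (T (xs n)))"
    using om unfolding nuclear_fun_def by blast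
  have Tc: "\<And>x. x \<in> carrier ?X \<Longrightarrow> T x \<in> carrier ?X" using T by (simp add: bops_def)
  obtain C where C: "\<And>x. x \<in> carrier ?X \<Longrightarrow> nrm ?X (T x) \<le> C * nrm ?X x"
    using T unfolding bops_def by blast
  define C' where "C' = max C 0"
  have C': "\<And>x. x \<in> carrier ?X \<Longrightarrow> nrm ?X (T x) \<le> C' * nrm ?X x"
    using C lpE_nrm_nonneg unfolding C'_def by (meson max.cobounded1 mult_right_mono order_trans)
  have lim: "((\<lambda>F. \<phi>s k (trunc F T (xs k))) \<longlongrightarrow> \<phi>s k (T (xs k))) (finite_subsets_at_top UNIV)" for k
  proof -
    let ?R = "\<lambda>F. (\<lambda>t. if t \<in> -F then T (xs k) t else 0)"
    have add: "\<And>a b. a \<in> carrier ?X \<Longrightarrow> b \<in> carrier ?X \<Longrightarrow> \<phi>s k (vadd ?X a b) = \<phi>s k a + \<phi>s k b"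
      using ph[of k] unfolding dual_def by blast
    have dec: "\<phi>s k (trunc F T (xs k)) = \<phi>s k (T (xs k)) - \<phi>s k (?R F)" for F
    proof -
      have "T (xs k) = vadd ?X (trunc F T (xs k)) (?R F)"
        by (auto simp: lpE_def trunc_def fun_eq_iff)
      then have "\<phi>s k (T (xs k)) = \<phi>s k (trunc F T (xs k)) + \<phi>s k (?R F)"
        using add trunc_carrier(1)[OF Tc[OF xs] p] unfolding trunc_def by metis
      then show ?thesis by simp
    qed
    have "((\<lambda>F. dnorm ?X (\<phi>s k) * nrm ?X (?R F)) \<longlongrightarrow> dnorm ?X (\<phi>s k) * 0) (finite_subsets_at_top UNIV)"
      by (intro tendsto_intros tail_tendsto[OF Tc[OF xs] p])
    then have "((\<lambda>F. dnorm ?X (\<phi>s k) * nrm ?X (?R F)) \<longlongrightarrow> 0) (finite_subsets_at_top UNIV)" by simp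
    then have "((\<lambda>F. \<phi>s k (?R F)) \<longlongrightarrow> 0) (finite_subsets_at_top UNIV)"
      by (rule Lim_null_comparison[rotated])
         (intro always_eventually allI dual_bound[OF cs _ p ph] trunc_carrier(1)[OF Tc[OF xs] p])
    then have "((\<lambda>F. \<phi>s k (T (xs k)) - \<phi>s k (?R F)) \<longlongrightarrow> \<phi>s k (T (xs k)) - 0) (finite_subsets_at_top UNIV)"
      by (intro tendsto_intros)
    then show ?thesis by (simp add: dec)
  qed
  have bound: "norm (\<phi>s k (trunc F T (xs k))) \<le> C' * (nrm ?X (xs k) * dnorm ?X (\<phi>s k))" for k F
  proof -
    have "norm (\<phi>s k (trunc F T (xs k))) \<le> dnorm ?X (\<phi>s k) * nrm ?X (trunc F T (xs k))"
      by (rule dual_bound[OF cs _ p ph]) (unfold trunc_def, rule trunc_carrier(1)[OF Tc[OF xs] p])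
    also have "\<dots> \<le> dnorm ?X (\<phi>s k) * nrm ?X (T (xs k))"
      by (rule mult_left_mono) (unfold trunc_def, rule trunc_carrier(3)[OF Tc[OF xs] p], rule dnorm_nonneg[OF ph cs])
    also have "\<dots> \<le> dnorm ?X (\<phi>s k) * (C' * nrm ?X (xs k))"
      by (rule mult_left_mono[OF C'[OF xs] dnorm_nonneg[OF ph cs]])
    finally show ?thesis by (simp add: algebra_simps)
  qed
  have "((\<lambda>F. \<Sum>k. \<phi>s k (trunc F T (xs k))) \<longlongrightarrow> (\<Sum>k. \<phi>s k (T (xs k)))) (finite_subsets_at_top UNIV)"
    using tannerys_theorem[where a="\<lambda>k F. \<phi>s k (trunc F T (xs k))" and b="\<lambda>k. \<phi>s k (T (xs k))"
        and M="\<lambda>k. C' * (nrm ?X (xs k) * dnorm ?X (\<phi>s k))" and F="finite_subsets_at_top UNIV"]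
    using lim bound summable_mult[OF sm] finite_subsets_at_top_neq_bot by (auto intro!: always_eventually)
  then show ?thesis by (simp add: oe)
qed

lemma nuclear_zero:
  fixes sc :: "complex \<Rightarrow> 'e::real_normed_vector \<Rightarrow> 'e"
  shows "nuclear_fun (lpE sc p :: ('g \<Rightarrow> 'e) nspace) (\<lambda>_. 0)"
proof -
  have a: "(\<lambda>_. 0) \<in> carrier (lpE sc p :: ('g \<Rightarrow> 'e) nspace)" by (simp add: lpE_def)
  have b: "(\<lambda>_. 0) \<in> dual (lpE sc p :: ('g \<Rightarrow> 'e) nspace)" unfolding dual_def by (auto intro!: exI[where x=0])
  have c: "nrm (lpE sc p :: ('g \<Rightarrow> 'e) nspace) (\<lambda>_. 0) = 0" by (simp add: lpE_def)
  show ?thesis unfolding nuclear_fun_def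
    by (rule exI[where x="\<lambda>_. (\<lambda>_. 0)"], rule exI[where x="\<lambda>_. (\<lambda>_. 0)"]) (simp add: a b c)
qed

lemma topspace_weakstar:
  fixes sc :: "complex \<Rightarrow> 'e::real_normed_vector \<Rightarrow> 'e"
  shows "topspace (weakstar (lpE sc p :: ('g \<Rightarrow> 'e) nspace)) = bops (lpE sc p)"
proof -
  have "UNIV \<in> {{T. \<omega> T \<in> U} |\<omega> U. nuclear_fun (lpE sc p :: ('g \<Rightarrow> 'e) nspace) \<omega> \<and> open U}"
    using nuclear_zero[of sc p] open_UNIV by blast
  then have "\<Union>{{T. \<omega> T \<in> U} |\<omega> U. nuclear_fun (lpE sc p :: ('g \<Rightarrow> 'e) nspace) \<omega> \<and> open U} = UNIV" by blast
  then show ?thesis unfolding weakstar_def by simp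
qed

lemma limitin_weakstar:
  fixes sc :: "complex \<Rightarrow> 'e::real_normed_vector \<Rightarrow> 'e"
  assumes conv: "\<And>\<omega>. nuclear_fun (lpE sc p :: ('g \<Rightarrow> 'e) nspace) \<omega> \<Longrightarrow> ((\<lambda>x. \<omega> (f x)) \<longlongrightarrow> \<omega> l) F"
    and l: "l \<in> bops (lpE sc p)" and fx: "\<And>x. f x \<in> bops (lpE sc p)"
  shows "limitin (weakstar (lpE sc p :: ('g \<Rightarrow> 'e) nspace)) f l F"
proof -
  let ?S = "{{T. \<omega> T \<in> U} |\<omega> U. nuclear_fun (lpE sc p :: ('g \<Rightarrow> 'e) nspace) \<omega> \<and> open U}"
  have "UNIV \<in> ?S"
    using nuclear_zero[of sc p] open_UNIV by blast
  then have top: "topspace (topology_generated_by ?S) = UNIV" by auto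
  have "eventually (\<lambda>x. f x \<in> W) F" if "generate_topology_on ?S W" "l \<in> W" for W
    using that
  proof (induction rule: generate_topology_on.induct)
    case Empty then show ?case by simp
  next
    case (Int a b) then show ?case by (auto intro: eventually_conj)
  next
    case (UN K)
    then obtain k where "k \<in> K" "l \<in> k" by blast
    with UN.IH have "eventually (\<lambda>x. f x \<in> k) F" by blast
    then show ?case by eventually_elim (use \<open>k \<in> K\<close> in blast)
  next
    case (Basis s)
    then obtain \<omega> U where s: "s = {T. \<omega> T \<in> U}" "nuclear_fun (lpE sc p :: ('g \<Rightarrow> 'e) nspace) \<omega>" "open U" by blast
    have "eventually (\<lambda>x. \<omega> (f x) \<in> U) F"
      using topological_tendstoD[OF conv[OF s(2)] s(3)] Basis s by blast
    then show ?case using s by simp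
  qed
  then have "limitin (topology_generated_by ?S) f l F"
    unfolding limitin_def using top by (simp add: openin_topology_generated_by_iff)
  then show ?thesis unfolding weakstar_def limitin_subtopology using l fx by simp
qed



lemma shift_bops:
  fixes t s :: "'g::group_add"
  assumes p: "p > 0"
  shows "(\<lambda>f u. if u = t then f (-s + u) else 0) \<in> bops (lp_scalar p :: ('g \<Rightarrow> complex) nspace)"
proof -
  let ?X = "lp_scalar p :: ('g \<Rightarrow> complex) nspace"
  let ?S = "\<lambda>f u. if u = t then f (-s + u) else (0::complex)"
  have eq: "\<And>f. (\<lambda>u. norm (?S f u) powr p) = (\<lambda>u. if u \<in> {t} then norm (f (-s+t)) powr p else 0)"
    by auto
  have c: "?S f \<in> carrier ?X" for f
  proof -
    have "(\<lambda>u. if u \<in> {t} then norm (f (-s+t)) powr p else 0) summable_on UNIV"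
      by (subst summable_on_cong_neutral[where T="{t}" and g="\<lambda>_. norm (f (-s+t)) powr p"]) auto
    then show ?thesis by (simp add: lp_scalar_def eq del: insert_iff)
  qed
  have n: "nrm ?X (?S f) \<le> 1 * nrm ?X f" if f: "f \<in> carrier ?X" for f
  proof -
    let ?g = "\<lambda>u. norm (f u) powr p"
    have g: "?g summable_on UNIV" using f by (simp add: lp_scalar_def)
    have "infsum (\<lambda>u. if u \<in> {t} then norm (f (-s+t)) powr p else 0) UNIV = infsum (\<lambda>_. norm (f (-s+t)) powr p) {t}"
      by (rule infsum_cong_neutral) auto
    also have "\<dots> = infsum ?g {-s+t}" by simp
    also have "\<dots> \<le> infsum ?g UNIV"
      by (rule infsum_mono_neutral) (use g in auto)
    finally have le: "infsum (\<lambda>u. if u \<in> {t} then norm (f (-s+t)) powr p else 0) UNIV \<le> infsum ?g UNIV" .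
    have "nrm ?X (?S f) = (infsum (\<lambda>u. if u \<in> {t} then norm (f (-s+t)) powr p else 0) UNIV) powr (1/p)"
      by (simp add: lp_scalar_def eq del: insert_iff)
    also have "\<dots> \<le> infsum ?g UNIV powr (1/p)"
      by (rule powr_mono2) (use p le in \<open>auto intro!: infsum_nonneg\<close>)
    finally show ?thesis by (simp add: lp_scalar_def)
  qed
  have "lin_on ?X ?S" unfolding lin_on_def by (auto simp: lp_scalar_def fun_eq_iff)
  then show ?thesis unfolding bops_def using c n by blast
qed

lemma trunc_alg:
  fixes sc :: "complex \<Rightarrow> 'e::real_normed_vector \<Rightarrow> 'e"
    and \<alpha> :: "'g::group_add \<Rightarrow> ('e \<Rightarrow> 'e) \<Rightarrow> ('e \<Rightarrow> 'e)"
  assumes cs: "complex_structure sc" and p: "p > 0" and AB: "A \<subseteq> bops (Espace sc)"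
    and \<alpha>A: "\<And>s a. a \<in> A \<Longrightarrow> \<alpha> s a \<in> A"
    and T: "T \<in> crossed_alg \<alpha> A" and Tb: "T \<in> bops (lpE sc p)" and F: "finite F"
  shows "trunc F T \<in> alg_tensor sc p A"
proof -
  obtain S c where S: "finite S" "\<And>s. s \<in> S \<Longrightarrow> c s \<in> A"
    and Teq: "T = (\<lambda>\<xi> t. \<Sum>s\<in>S. pi_rep \<alpha> (c s) (lam_rep s \<xi>) t)"
    using T unfolding crossed_alg_def by blast
  obtain L where L: "distinct L" "set L = F \<times> S"
    using finite_distinct_list[of "F \<times> S"] F S(1) by blast
  define xs where "xs i = (\<lambda>(f::'g \<Rightarrow> complex) u. if u = fst (L!i) then f (-snd (L!i) + u) else 0)" for i
  define as where "as i = \<alpha> (- fst (L!i)) (c (snd (L!i)))" for i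
  have mem: "i < length L \<Longrightarrow> L ! i \<in> F \<times> S" for i using L(2) nth_mem by blast
  have xsb: "xs i \<in> bops (lp_scalar p :: ('g \<Rightarrow> complex) nspace)" for i
    unfolding xs_def by (rule shift_bops[OF p])
  have asA: "i < length L \<Longrightarrow> as i \<in> A" for i
    unfolding as_def using mem[of i] S(2) \<alpha>A by auto
  have lin: "a \<in> A \<Longrightarrow> a (sc z x) = sc z (a x)" for a z x
    using AB unfolding bops_def lin_on_def Espace_def by auto
  have reidx: "(\<Sum>i<length L. g (L!i)) = (\<Sum>x\<in>F \<times> S. g x)" for g :: "'g \<times> 'g \<Rightarrow> 'e"
  proof -
    have "set L = nth L ` {..<length L}" by (auto simp: set_conv_nth)
    moreover have "inj_on (nth L) {..<length L}" using inj_on_nth[OF L(1)] by auto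
    ultimately show ?thesis using L(2) sum.reindex[of "nth L" "{..<length L}" g] by simp
  qed
  have form: "trunc F T (\<lambda>s. sc (f s) e) = (\<lambda>u. \<Sum>i<length L. sc (xs i f u) (as i e))" for f e
  proof
    fix u
    let ?H = "\<Sum>s\<in>S. sc (f (-s+u)) (\<alpha> (-u) (c s) e)"
    have "(\<Sum>i<length L. sc (xs i f u) (as i e))
        = (\<Sum>x\<in>F \<times> S. sc (if u = fst x then f (-snd x + u) else 0) (\<alpha> (- fst x) (c (snd x)) e))"
      unfolding xs_def as_def by (rule reidx)
    also have "\<dots> = (\<Sum>t\<in>F. \<Sum>s\<in>S. sc (if u = t then f (-s + u) else 0) (\<alpha> (- t) (c s) e))"
      by (subst sum.cartesian_product) (simp add: case_prod_beta)
    also have "\<dots> = (\<Sum>t\<in>F. if u = t then ?H else 0)"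
      by (rule sum.cong) (auto simp: sc_zero[OF cs])
    also have "\<dots> = (if u \<in> F then ?H else 0)"
      using F by (simp add: sum.delta)
    also have "\<dots> = trunc F T (\<lambda>s. sc (f s) e) u"
      unfolding trunc_def Teq pi_rep_def lam_rep_def
      using lin \<alpha>A S(2) by auto
    finally show "trunc F T (\<lambda>s. sc (f s) e) u = (\<Sum>i<length L. sc (xs i f u) (as i e))" by simp
  qed
  show ?thesis unfolding alg_tensor_def
    using trunc_bops[OF Tb p cs, of F] xsb asA form by blast
qed


lemma crossed_in_closure:
  fixes sc :: "complex \<Rightarrow> 'e::real_normed_vector \<Rightarrow> 'e"
    and \<alpha> :: "'g::group_add \<Rightarrow> ('e \<Rightarrow> 'e) \<Rightarrow> ('e \<Rightarrow> 'e)"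
  assumes cs: "complex_structure sc" and p: "p > 0" and AB: "A \<subseteq> bops (Espace sc)"
    and \<alpha>A: "\<And>s a. a \<in> A \<Longrightarrow> \<alpha> s a \<in> A"
    and T: "T \<in> crossed_alg \<alpha> A" and Tb: "T \<in> bops (lpE sc p :: ('g \<Rightarrow> 'e) nspace)"
  shows "T \<in> weakstar (lpE sc p :: ('g \<Rightarrow> 'e) nspace) closure_of alg_tensor sc p A"
proof -
  let ?X = "lpE sc p :: ('g \<Rightarrow> 'e) nspace"
  let ?F = "finite_subsets_at_top (UNIV :: 'g set)"
  have lim: "limitin (weakstar ?X) (\<lambda>F. trunc F T) T ?F"
    by (rule limitin_weakstar) (auto intro: nuclear_trunc[OF Tb p cs] Tb trunc_bops[OF Tb p cs])
  have ev: "eventually (\<lambda>F. trunc F T \<in> alg_tensor sc p A) ?F"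
    by (rule eventually_finite_subsets_at_top_weakI) (rule trunc_alg[OF cs p AB \<alpha>A T Tb])
  show ?thesis unfolding in_closure_of
  proof (intro conjI allI impI)
    show "T \<in> topspace (weakstar ?X)" using Tb topspace_weakstar by blast
    fix W assume W: "T \<in> W \<and> openin (weakstar ?X) W"
    then have "eventually (\<lambda>F. trunc F T \<in> W) ?F" using lim unfolding limitin_def by blast
    then have "eventually (\<lambda>F. trunc F T \<in> alg_tensor sc p A \<and> trunc F T \<in> W) ?F"
      using ev by (simp add: eventually_conj)
    then obtain F where "trunc F T \<in> alg_tensor sc p A \<and> trunc F T \<in> W"
      using eventually_happens' finite_subsets_at_top_neq_bot by blast
    then show "\<exists>y. y \<in> alg_tensor sc p A \<and> y \<in> W" by blast
  qed
qed

theorem mainTheorem10: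
  fixes p :: real
    and M :: "'m measure"
    and sc :: "complex \<Rightarrow> 'e::real_normed_vector \<Rightarrow> 'e"
    and A :: "('e \<Rightarrow> 'e) set"
    and \<alpha> :: "'g::{group_add,countable} \<Rightarrow> ('e \<Rightarrow> 'e) \<Rightarrow> ('e \<Rightarrow> 'e)"
  assumes "1 < p"
    and "complex_structure sc"
    and "sigma_finite_measure M"
    and "\<exists>U. Lp_repr sc p M U"
    and "\<exists>D::'e set. countable D \<and> closure D = UNIV"
    and "wstar_closed_unital_subalg sc A"
    and "wstar_isometric_action sc \<alpha> A"
  shows "Wstar_p sc p \<alpha> A \<subseteq> vN_tensor sc p A"
proof -
  let ?X = "lpE sc p :: ('g \<Rightarrow> 'e) nspace"
  have p: "p > 0" using assms(1) by simp
  have AB: "A \<subseteq> bops (Espace sc)" using assms(6) unfolding wstar_closed_unital_subalg_def by blast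
  have \<alpha>A: "\<And>s a. a \<in> A \<Longrightarrow> \<alpha> s a \<in> A"
    using assms(7) unfolding wstar_isometric_action_def bij_betw_def by blast
  have sub: "topspace (weakstar ?X) \<inter> crossed_alg \<alpha> A \<subseteq> weakstar ?X closure_of alg_tensor sc p A"
    using crossed_in_closure[where \<alpha>=\<alpha>, OF assms(2) p AB \<alpha>A] topspace_weakstar by blast
  have "Wstar_p sc p \<alpha> A = weakstar ?X closure_of (topspace (weakstar ?X) \<inter> crossed_alg \<alpha> A)"
    unfolding Wstar_p_def by (rule closure_of_restrict)
  also have "\<dots> \<subseteq> weakstar ?X closure_of (weakstar ?X closure_of alg_tensor sc p A)"
    by (rule closure_of_mono[OF sub])
  also have "\<dots> = vN_tensor sc p A" unfolding vN_tensor_def by simp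
  finally show ?thesis .
qed

end
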